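(* Consider the multi-arm multi-stage platform design described in the context, with arbitrary pre-specified adding stages $s(1),\dots,s(K)$, numbers of analyses $J_1,\dots,J_K$, sample sizes and boundaries $l_{k,j}\le u_{k,j}$ (with $l_{k,J_k}=u_{k,J_k}$). For any vector of true means $(\mu_0,\mu_1,\dots,\mu_K)$ (equivalently any $\Theta=(\theta_1,\dots,\theta_K)$ with $\theta_k=\mu_k-\mu_0$), $$P(\text{reject at least one true } H_{0k}\mid \Theta)\;\le\; P(\text{reject at least one true } H_{0k}\mid H_G),$$ where the right-hand side is computed under the global null hypothesis $H_G:\mu_0=\mu_1=\dots=\mu_K$ (under which every $H_{0k}$ is true). In particular, the family-wise error rate is maximised under the global null hypothesis.
   Context: A trial compares $K$ experimental arms with one common control arm (arm $0$). Outcomes on arm $k\in\{0,\dots,K\}$ are independent $N(\mu_k,\sigma^2)$ with $\sigma^2$ known. The control is recruited over stages $1,\dots,J_0$, with an analysis at the end of each stage; $n_{0,j}$ denotes the cumulative number of control patients by the end of stage $j$ ($n_{0,0}=0$). Experimental arm $k$ is added at the end of control stage $s(k)\ge 0$ and has analyses $j=1,\dots,J_k$ (with $s(k)+J_k\le J_0$), its $j$-th analysis coinciding with the end of control stage $s(k)+j$; $n_{k,j}$ denotes the cumulative number of patients on arm $k$ by its $j$-th analysis. Only concurrent controls are used: the test statistic for arm $k$ at its $j$-th analysis is $$Z_{k,j}=\frac{n_{k,j}^{-1}\sum_{i=1}^{n_{k,j}}X_{k,i}-(n_{0,s(k)+j}-n_{0,s(k)})^{-1}\sum_{i=n_{0,s(k)}+1}^{n_{0,s(k)+j}}X_{0,i}}{\sigma\sqrt{n_{k,j}^{-1}+(n_{0,s(k)+j}-n_{0,s(k)})^{-1}}},$$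 where $X_{k,i}$ is the outcome of the $i$-th patient on arm $k$. The null hypotheses are $H_{0k}:\mu_k\le\mu_0$, $k=1,\dots,K$. Pre-specified boundaries $l_{k,j}\le u_{k,j}$, $j=1,\dots,J_k$, with $l_{k,J_k}=u_{k,J_k}$, are used as follows: at the $j$-th analysis of an arm $k$ still in the trial, if $Z_{k,j}>u_{k,j}$ then $H_{0k}$ is rejected and the whole trial stops; if $Z_{k,j}<l_{k,j}$ arm $k$ is dropped from all subsequent stages; otherwise arm $k$ (and the control) continue to the next stage. The trial also stops if all arms have been dropped. A hypothesis not rejected by these rules is not rejected. The "probability of rejecting at least one true $H_{0k}$" is the probability, under the given means, that this procedure rejects some $H_{0k}$ with $\mu_k\le\mu_0$. *)

theory Defs
  imports "HOL-Probability.Probability"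
begin

text \<open>Arm 0 is the control; arms 1..K are experimental.
  n0 j: cumulative control patients at end of control stage j (j = 0..J0).
  s k: stage at whose end arm k is added; J k: number of analyses of arm k;
  n k j: cumulative patients on arm k at its j-th analysis;
  l k j, u k j: lower / upper boundaries.\<close>

record design =
  K  :: nat
  J0 :: nat
  n0 :: "nat \<Rightarrow> nat"
  s  :: "nat \<Rightarrow> nat"
  J  :: "nat \<Rightarrow> nat"
  n  :: "nat \<Rightarrow> nat \<Rightarrow> nat"
  l  :: "nat \<Rightarrow> nat \<Rightarrow> real"
  u  :: "nat \<Rightarrow> nat \<Rightarrow> real"

text \<open>Outcomes: omega (k, i) is the outcome of the i-th patient on arm k.\<close>

definition valid_design :: "design \<Rightarrow> bool" where
  "valid_design D \<longleftrightarrow>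
     n0 D 0 = 0 \<and>
     (\<forall>j < J0 D. n0 D j < n0 D (Suc j)) \<and>
     (\<forall>k \<in> {1..K D}. 1 \<le> J D k \<and> s D k + J D k \<le> J0 D \<and>
        (\<forall>j \<in> {1..J D k}. 0 < n D k j) \<and>
        (\<forall>j \<in> {1..<J D k}. n D k j \<le> n D k (Suc j)) \<and>
        (\<forall>j \<in> {1..J D k}. l D k j \<le> u D k j) \<and>
        l D k (J D k) = u D k (J D k))"

text \<open>Test statistic of arm k at its j-th analysis, using concurrent controls only.\<close>
definition zstat :: "design \<Rightarrow> real \<Rightarrow> nat \<Rightarrow> nat \<Rightarrow> (nat \<times> nat \<Rightarrow> real) \<Rightarrow> real" where
  "zstat D \<sigma> k j \<omega> =
     (let nk = real (n D k j);
          nc = real (n0 D (s D k + j) - n0 D (s D k))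
      in ((\<Sum>i\<in>{1..n D k j}. \<omega> (k, i)) / nk
          - (\<Sum>i\<in>{n0 D (s D k) + 1..n0 D (s D k + j)}. \<omega> (0, i)) / nc)
         / (\<sigma> * sqrt (1 / nk + 1 / nc)))"

text \<open>State of the trial after the analyses at the end of control stage t:
  (set of experimental arms still in the trial, set of hypotheses rejected).
  The trial has stopped iff the rejected set is nonempty (once stopped it is frozen).
  An arm present at the end of stage t (t \<ge> s k) has its (t - s k)-th analysis there.\<close>
primrec trial_state :: "design \<Rightarrow> real \<Rightarrow> (nat \<times> nat \<Rightarrow> real) \<Rightarrow> nat \<Rightarrow> nat set \<times> nat set" where
  "trial_state D \<sigma> \<omega> 0 = ({k \<in> {1..K D}. s D k = 0}, {})"
| "trial_state D \<sigma> \<omega> (Suc t) =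
     (let (A, R) = trial_state D \<sigma> \<omega> t in
      if R \<noteq> {} then (A, R) else
      let jj = (\<lambda>k. Suc t - s D k);
          z = (\<lambda>k. zstat D \<sigma> k (jj k) \<omega>);
          Rej = {k \<in> A. z k > u D k (jj k)};
          Drop = {k \<in> A. z k < l D k (jj k)};
          Fin = {k \<in> A. jj k = J D k}
      in ((A - Drop - Fin) \<union> {k \<in> {1..K D}. s D k = Suc t}, Rej))"

definition rejected :: "design \<Rightarrow> real \<Rightarrow> (nat \<times> nat \<Rightarrow> real) \<Rightarrow> nat set" where
  "rejected D \<sigma> \<omega> = snd (trial_state D \<sigma> \<omega> (J0 D))"

definition outcome_measure :: "nat \<Rightarrow> nat \<Rightarrow> (nat \<Rightarrow> real) \<Rightarrow> real \<Rightarrow> (nat \<times> nat \<Rightarrow> real) measure" where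
  "outcome_measure KK N \<mu> \<sigma> =
     PiM ({0..KK} \<times> {1..N}) (\<lambda>(k, i). density lborel (normal_density (\<mu> k) \<sigma>))"

definition fwer :: "design \<Rightarrow> nat \<Rightarrow> (nat \<Rightarrow> real) \<Rightarrow> real \<Rightarrow> real" where
  "fwer D N \<mu> \<sigma> =
     measure (outcome_measure (K D) N \<mu> \<sigma>)
       {\<omega> \<in> space (outcome_measure (K D) N \<mu> \<sigma>). \<exists>k \<in> rejected D \<sigma> \<omega>. \<mu> k \<le> \<mu> 0}"

end

theory Submission
  imports Defs
begin


lemma norm_shift:
  assumes "0 < \<sigma>"
  shows "distr (density lborel (normal_density m \<sigma>)) (density lborel (normal_density (m + c) \<sigma>)) (\<lambda>x. x + c)
       = density lborel (normal_density (m + c) \<sigma>)"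
proof -
  interpret P: prob_space "density lborel (normal_density m \<sigma>)" using assms by (rule prob_space_normal_density)
  have d0: "distributed (density lborel (normal_density m \<sigma>)) lborel (\<lambda>x. x) (normal_density m \<sigma>)"
    unfolding distributed_def by (auto simp: distr_id2)
  have "distributed (density lborel (normal_density m \<sigma>)) lborel (\<lambda>x. c + 1 * x) (normal_density (c + 1 * m) (\<bar>1\<bar> * \<sigma>))"
    by (rule P.normal_density_affine[OF d0 assms]) simp
  hence "distr (density lborel (normal_density m \<sigma>)) lborel (\<lambda>x. x + c) = density lborel (normal_density (m + c) \<sigma>)"
    unfolding distributed_def by (simp add: add.commute)
  moreover have "distr (density lborel (normal_density m \<sigma>)) (density lborel (normal_density (m + c) \<sigma>)) (\<lambda>x. x + c)
     = distr (density lborel (normal_density m \<sigma>)) lborel (\<lambda>x. x + c)"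
    by (rule distr_cong) auto
  ultimately show ?thesis by simp
qed

lemma distr_PiM_finite_prob_space_gen:
  assumes fin: "finite I"
  assumes "product_prob_space M"
  assumes "product_prob_space M'"
  assumes [measurable]: "\<And>i. i \<in> I \<Longrightarrow> f i \<in> measurable (M i) (M' i)"
  shows   "distr (PiM I M) (PiM I M') (\<lambda>x. \<lambda>i\<in>I. f i (x i)) = PiM I (\<lambda>i. distr (M i) (M' i) (f i))"
proof -
  interpret M: product_prob_space M by fact
  interpret M': product_prob_space M' by fact
  define N where "N = (\<lambda>i. if i \<in> I then distr (M i) (M' i) (f i) else M' i)"
  have [intro]: "prob_space (N i)" for i
    by (auto simp: N_def intro!: M.M.prob_space_distr M'.prob_space)
  interpret N: product_prob_space N
    by (intro product_prob_spaceI) (auto simp: N_def M'.prob_space intro: M.M.prob_space_distr)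
  have meas: "(\<lambda>x. \<lambda>i\<in>I. f i (x i)) \<in> Pi\<^sub>M I M \<rightarrow>\<^sub>M Pi\<^sub>M I M'"
    by (rule measurable_restrict) (auto intro: measurable_compose[OF measurable_component_singleton])
  have "distr (PiM I M) (PiM I M') (\<lambda>x. \<lambda>i\<in>I. f i (x i)) = PiM I N"
  proof (rule N.PiM_eqI)
    have N_events_eq: "sets (Pi\<^sub>M I N) = sets (Pi\<^sub>M I M')"
      unfolding N_def by (intro sets_PiM_cong) auto
    also have "\<dots> = sets (distr (Pi\<^sub>M I M) (Pi\<^sub>M I M') (\<lambda>x. \<lambda>i\<in>I. f i (x i)))"
      by simp
    finally show "sets (distr (Pi\<^sub>M I M) (Pi\<^sub>M I M') (\<lambda>x. \<lambda>i\<in>I. f i (x i))) = sets (Pi\<^sub>M I N)"  ..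
    fix A assume A: "\<And>i. i \<in> I \<Longrightarrow> A i \<in> N.M.events i"
    have "emeasure (distr (Pi\<^sub>M I M) (Pi\<^sub>M I M') (\<lambda>x. \<lambda>i\<in>I. f i (x i))) (Pi\<^sub>E I A) =
          emeasure (Pi\<^sub>M I M) ((\<lambda>x. \<lambda>i\<in>I. f i (x i)) -` Pi\<^sub>E I A \<inter> space (Pi\<^sub>M I M))"
    proof (intro emeasure_distr meas)
      show "Pi\<^sub>E I A \<in> sets (Pi\<^sub>M I M')"
        unfolding N_events_eq [symmetric] by (intro sets_PiM_I_finite fin A)
    qed
    also have "(\<lambda>x. \<lambda>i\<in>I. f i (x i)) -` Pi\<^sub>E I A \<inter> space (Pi\<^sub>M I M) = Pi\<^sub>E I (\<lambda>i. f i -` A i \<inter> space (M i))"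
      using A by (auto simp: space_PiM PiE_def Pi_def extensional_def N_def)
    also have "emeasure (Pi\<^sub>M I M) (Pi\<^sub>E I (\<lambda>i. f i -` A i \<inter> space (M i))) =
          (\<Prod>i\<in>I. emeasure (M i) (f i -` A i \<inter> space (M i)))"
      using A by (intro M.emeasure_PiM fin) (auto simp: N_def)
    also have "\<dots> = (\<Prod>i\<in>I. emeasure (distr (M i) (M' i) (f i)) (A i))"
      using A by (intro prod.cong emeasure_distr [symmetric]) (auto simp: N_def)
    also have "\<dots> = (\<Prod>i\<in>I. emeasure (N i) (A i))"
      unfolding N_def by (intro prod.cong) (auto simp: N_def)
    finally show "emeasure (distr (Pi\<^sub>M I M) (Pi\<^sub>M I M') (\<lambda>x. \<lambda>i\<in>I. f i (x i))) (Pi\<^sub>E I A) = \<dots>" .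
  qed fact+
  also have "PiM I N = PiM I (\<lambda>i. distr (M i) (M' i) (f i))"
    by (intro PiM_cong) (auto simp: N_def)
  finally show ?thesis .
qed




lemma n0_strict:
  assumes "valid_design D" "a < b" "b \<le> J0 D"
  shows "n0 D a < n0 D b"
  using assms(2,3)
proof (induction b)
  case 0 then show ?case by simp
next
  case (Suc b)
  have st: "n0 D b < n0 D (Suc b)" using assms(1) Suc.prems unfolding valid_design_def by auto
  show ?case
  proof (cases "a = b")
    case True then show ?thesis using st by simp
  next
    case False then have "a < b" using Suc.prems by simp
    then show ?thesis using Suc.IH Suc.prems st by simp
  qed
qed

lemma n0_mono:
  assumes "valid_design D" "a \<le> b" "b \<le> J0 D"
  shows "n0 D a \<le> n0 D b"
  using n0_strict[OF assms(1) _ assms(3), of a] assms(2) by (cases "a = b") auto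

lemma ts_Suc_fst:
  "k \<in> fst (trial_state D \<sigma> \<omega> (Suc t)) \<longleftrightarrow>
    (if snd (trial_state D \<sigma> \<omega> t) \<noteq> {} then k \<in> fst (trial_state D \<sigma> \<omega> t)
     else (k \<in> fst (trial_state D \<sigma> \<omega> t) \<and> \<not> zstat D \<sigma> k (Suc t - s D k) \<omega> < l D k (Suc t - s D k)
             \<and> Suc t - s D k \<noteq> J D k) \<or> (k \<in> {1..K D} \<and> s D k = Suc t))"
  by (cases "trial_state D \<sigma> \<omega> t") (auto simp: Let_def)

lemma ts_Suc_snd:
  "k \<in> snd (trial_state D \<sigma> \<omega> (Suc t)) \<longleftrightarrow>
    (if snd (trial_state D \<sigma> \<omega> t) \<noteq> {} then k \<in> snd (trial_state D \<sigma> \<omega> t)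
     else k \<in> fst (trial_state D \<sigma> \<omega> t) \<and> u D k (Suc t - s D k) < zstat D \<sigma> k (Suc t - s D k) \<omega>)"
  by (cases "trial_state D \<sigma> \<omega> t") (auto simp: Let_def)

lemma ts_Suc_stop:
  "snd (trial_state D \<sigma> \<omega> t) \<noteq> {} \<Longrightarrow> trial_state D \<sigma> \<omega> (Suc t) = trial_state D \<sigma> \<omega> t"
  by (cases "trial_state D \<sigma> \<omega> t") (auto simp: Let_def)

lemma ts_sub:
  "fst (trial_state D \<sigma> \<omega> t) \<subseteq> {1..K D} \<and> snd (trial_state D \<sigma> \<omega> t) \<subseteq> {1..K D}"
proof (induction t)
  case 0 then show ?case by auto
next
  case (Suc t)
  show ?case
  proof (cases "snd (trial_state D \<sigma> \<omega> t) \<noteq> {}")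
    case True then show ?thesis using Suc ts_Suc_stop by metis
  next
    case False
    then show ?thesis using Suc unfolding subset_iff ts_Suc_fst ts_Suc_snd by auto
  qed
qed

lemma ts_inv:
  assumes "valid_design D"
  shows "snd (trial_state D \<sigma> \<omega> t) = {} \<longrightarrow>
    (\<forall>k\<in>fst (trial_state D \<sigma> \<omega> t). k \<in> {1..K D} \<and> s D k \<le> t \<and> Suc t - s D k \<le> J D k)"
proof (induction t)
  case 0 then show ?case using assms unfolding valid_design_def by auto
next
  case (Suc t)
  show ?case
  proof (intro impI ballI)
    fix k assume e: "snd (trial_state D \<sigma> \<omega> (Suc t)) = {}" and k: "k \<in> fst (trial_state D \<sigma> \<omega> (Suc t))"
    have R: "snd (trial_state D \<sigma> \<omega> t) = {}"
      using e ts_Suc_stop by metis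
    show "k \<in> {1..K D} \<and> s D k \<le> Suc t \<and> Suc (Suc t) - s D k \<le> J D k"
      using k R Suc assms unfolding ts_Suc_fst valid_design_def by auto
  qed
qed

lemma compare:
  assumes vd: "valid_design D"
    and H: "\<And>k j. k \<in> {1..K D} \<Longrightarrow> j \<in> {1..J D k} \<Longrightarrow> \<mu> k \<le> \<mu> 0 \<Longrightarrow> zstat D \<sigma> k j \<omega>' \<le> zstat D \<sigma> k j \<omega>"
  shows "snd (trial_state D \<sigma> \<omega> t) \<noteq> {} \<or>
     ((\<forall>k\<in>snd (trial_state D \<sigma> \<omega>' t). \<not> \<mu> k \<le> \<mu> 0) \<and>
      (snd (trial_state D \<sigma> \<omega>' t) = {} \<longrightarrow> (\<forall>k\<in>fst (trial_state D \<sigma> \<omega>' t). \<mu> k \<le> \<mu> 0 \<longrightarrow> k \<in> fst (trial_state D \<sigma> \<omega> t))))"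
proof (induction t)
  case 0 then show ?case by auto
next
  case (Suc t)
  show ?case
  proof (cases "snd (trial_state D \<sigma> \<omega> t) \<noteq> {}")
    case True then show ?thesis using ts_Suc_stop by metis
  next
    case R: False
    with Suc have Q1: "\<forall>k\<in>snd (trial_state D \<sigma> \<omega>' t). \<not> \<mu> k \<le> \<mu> 0"
      and Q2: "snd (trial_state D \<sigma> \<omega>' t) = {} \<Longrightarrow> (\<forall>k\<in>fst (trial_state D \<sigma> \<omega>' t). \<mu> k \<le> \<mu> 0 \<longrightarrow> k \<in> fst (trial_state D \<sigma> \<omega> t))"
      by auto
    have inv: "\<And>k. k\<in>fst (trial_state D \<sigma> \<omega> t) \<Longrightarrow> k \<in> {1..K D} \<and> s D k \<le> t \<and> Suc t - s D k \<le> J D k"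
      using ts_inv[OF vd, of \<sigma> \<omega> t] R by auto
    show ?thesis
    proof (cases "snd (trial_state D \<sigma> \<omega>' t) \<noteq> {}")
      case True then show ?thesis using ts_Suc_stop[of D \<sigma> \<omega>' t] Q1 by simp
    next
      case R': False
      have Q2': "\<forall>k\<in>fst (trial_state D \<sigma> \<omega>' t). \<mu> k \<le> \<mu> 0 \<longrightarrow> k \<in> fst (trial_state D \<sigma> \<omega> t)" using Q2 R' by blast
      have zle: "zstat D \<sigma> k (Suc t - s D k) \<omega>' \<le> zstat D \<sigma> k (Suc t - s D k) \<omega>"
        if "k\<in>fst (trial_state D \<sigma> \<omega> t)" "\<mu> k \<le> \<mu> 0" for k
        using inv[OF that(1)] by (intro H that(2)) auto
      show ?thesis
      proof (cases "\<exists>k\<in>snd (trial_state D \<sigma> \<omega>' (Suc t)). \<mu> k \<le> \<mu> 0")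
        case True
        then obtain k where k: "k \<in> snd (trial_state D \<sigma> \<omega>' (Suc t))" "\<mu> k \<le> \<mu> 0" by auto
        then have k': "k \<in> fst (trial_state D \<sigma> \<omega>' t)" "u D k (Suc t - s D k) < zstat D \<sigma> k (Suc t - s D k) \<omega>'"
          using R' unfolding ts_Suc_snd by auto
        have "k \<in> fst (trial_state D \<sigma> \<omega> t)" using Q2' k'(1) k(2) by auto
        with k'(2) zle[OF this k(2)] have "k \<in> snd (trial_state D \<sigma> \<omega> (Suc t))"
          using R unfolding ts_Suc_snd by auto
        then show ?thesis by auto
      next
        case False
        have "\<forall>k\<in>fst (trial_state D \<sigma> \<omega>' (Suc t)). \<mu> k \<le> \<mu> 0 \<longrightarrow> k \<in> fst (trial_state D \<sigma> \<omega> (Suc t))"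
        proof (intro ballI impI)
          fix k assume k: "k \<in> fst (trial_state D \<sigma> \<omega>' (Suc t))" "\<mu> k \<le> \<mu> 0"
          show "k \<in> fst (trial_state D \<sigma> \<omega> (Suc t))"
          proof (cases "k \<in> fst (trial_state D \<sigma> \<omega>' t) \<and> \<not> zstat D \<sigma> k (Suc t - s D k) \<omega>' < l D k (Suc t - s D k)
             \<and> Suc t - s D k \<noteq> J D k")
            case True
            then have "k \<in> fst (trial_state D \<sigma> \<omega> t)" using Q2' k(2) by auto
            with True zle[OF this k(2)] show ?thesis using R unfolding ts_Suc_fst by auto
          next
            case False
            then show ?thesis using k R R' unfolding ts_Suc_fst by auto
          qed
        qed
        then show ?thesis using False by auto
      qed
    qed
  qed
qed




lemma zstat_shift:
  assumes vd: "valid_design D" and sig: "0 < \<sigma>" and hN0: "n0 D (J0 D) \<le> N"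
    and hN: "\<forall>k \<in> {1..K D}. \<forall>j \<in> {1..J D k}. n D k j \<le> N"
    and k: "k \<in> {1..K D}" and j: "j \<in> {1..J D k}" and c: "c k \<le> c 0"
  shows "zstat D \<sigma> k j (\<lambda>x\<in>{0..K D}\<times>{1..N}. \<omega> x + c (fst x)) \<le> zstat D \<sigma> k j \<omega>"
proof -
  define \<omega>' where "\<omega>' = (\<lambda>x\<in>{0..K D}\<times>{1..N}. \<omega> x + c (fst x))"
  define a where "a = n0 D (s D k)"
  define b where "b = n0 D (s D k + j)"
  define nk where "nk = n D k j"
  have sJ: "s D k + J D k \<le> J0 D" and nkpos: "0 < nk" using vd k j unfolding valid_design_def nk_def by auto
  have ab: "a < b" unfolding a_def b_def using n0_strict[OF vd, of "s D k" "s D k + j"] j sJ by auto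
  have bN: "b \<le> N" unfolding b_def using n0_mono[OF vd, of "s D k + j" "J0 D"] j sJ hN0 by auto
  have nkN: "nk \<le> N" using hN k j unfolding nk_def by auto
  have S1: "(\<Sum>i\<in>{1..nk}. \<omega>' (k, i)) = (\<Sum>i\<in>{1..nk}. \<omega> (k, i)) + real nk * c k"
  proof -
    have "(\<Sum>i\<in>{1..nk}. \<omega>' (k, i)) = (\<Sum>i\<in>{1..nk}. \<omega> (k, i) + c k)"
      using k nkN by (intro sum.cong) (auto simp: \<omega>'_def)
    then show ?thesis by (simp add: sum.distrib)
  qed
  have S2: "(\<Sum>i\<in>{a+1..b}. \<omega>' (0, i)) = (\<Sum>i\<in>{a+1..b}. \<omega> (0, i)) + real (b - a) * c 0"
  proof -
    have "(\<Sum>i\<in>{a+1..b}. \<omega>' (0, i)) = (\<Sum>i\<in>{a+1..b}. \<omega> (0, i) + c 0)"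
      using bN by (intro sum.cong) (auto simp: \<omega>'_def)
    then show ?thesis using ab by (simp add: sum.distrib)
  qed
  define X1 where "X1 = (\<Sum>i\<in>{1..nk}. \<omega> (k, i))"
  define X2 where "X2 = (\<Sum>i\<in>{a+1..b}. \<omega> (0, i))"
  define Dn where "Dn = \<sigma> * sqrt (1 / real nk + 1 / real (b - a))"
  have Dpos: "0 < Dn" unfolding Dn_def using sig nkpos ab by (intro mult_pos_pos real_sqrt_gt_zero add_pos_pos) auto
  have nkr: "real nk \<noteq> 0" and bar: "real (b - a) \<noteq> 0" using nkpos ab by auto
  have e1: "zstat D \<sigma> k j \<omega>' = ((X1 + real nk * c k) / real nk - (X2 + real (b - a) * c 0) / real (b - a)) / Dn"
    unfolding zstat_def Let_def S1[unfolded nk_def a_def b_def] S2[unfolded a_def b_def]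
    by (simp add: X1_def X2_def Dn_def nk_def a_def b_def)
  have e2: "zstat D \<sigma> k j \<omega> = (X1 / real nk - X2 / real (b - a)) / Dn"
    unfolding zstat_def Let_def by (simp add: X1_def X2_def Dn_def nk_def a_def b_def)
  have "(X1 + real nk * c k) / real nk - (X2 + real (b - a) * c 0) / real (b - a)
        = (X1 / real nk - X2 / real (b - a)) + (c k - c 0)"
    using nkr bar by (simp add: field_simps)
  also have "\<dots> \<le> X1 / real nk - X2 / real (b - a)" using c by simp
  finally show ?thesis unfolding \<omega>'_def[symmetric] e1 e2 using Dpos by (simp add: divide_right_mono)
qed




lemma comp_meas[measurable]:
  "(\<lambda>\<omega>. \<omega> x) \<in> borel_measurable (PiM I (\<lambda>_. borel :: real measure))"
proof (cases "x \<in> I")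
  case True then show ?thesis by (rule measurable_component_singleton)
next
  case False
  have "(\<lambda>\<omega>. \<omega> x) \<in> borel_measurable (PiM I (\<lambda>_. borel :: real measure)) \<longleftrightarrow>
        (\<lambda>\<omega>. undefined :: real) \<in> borel_measurable (PiM I (\<lambda>_. borel :: real measure))"
    by (rule measurable_cong) (use False in \<open>auto simp: space_PiM PiE_def extensional_def\<close>)
  then show ?thesis by simp
qed

lemma zstat_meas[measurable]:
  "(\<lambda>\<omega>. zstat D \<sigma> k j \<omega>) \<in> borel_measurable (PiM I (\<lambda>_. borel :: real measure))"
  unfolding zstat_def Let_def by measurable

lemma pconst: "Measurable.pred M (\<lambda>x. P)"
  unfolding Measurable.pred_def by (cases P) simp_all

definition inA where "inA D \<sigma> t k \<omega> \<longleftrightarrow> k \<in> fst (trial_state D \<sigma> \<omega> t)"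
definition inR where "inR D \<sigma> t k \<omega> \<longleftrightarrow> k \<in> snd (trial_state D \<sigma> \<omega> t)"

lemma ts_meas:
  "\<forall>k. Measurable.pred (PiM I (\<lambda>_. borel :: real measure)) (inA D \<sigma> t k) \<and>
       Measurable.pred (PiM I (\<lambda>_. borel :: real measure)) (inR D \<sigma> t k)"
proof (induction t)
  case 0 then show ?case unfolding inA_def inR_def by (simp add: pconst)
next
  case (Suc t)
  have [measurable]: "Measurable.pred (PiM I (\<lambda>_. borel :: real measure)) (inA D \<sigma> t k)"
     "Measurable.pred (PiM I (\<lambda>_. borel :: real measure)) (inR D \<sigma> t k)" for k
    using Suc by auto
  have ne: "(snd (trial_state D \<sigma> \<omega> t) \<noteq> {}) = (\<exists>k. inR D \<sigma> t k \<omega>)" for \<omega> by (auto simp: inR_def)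
  have eA: "inA D \<sigma> (Suc t) k = (\<lambda>\<omega>. ((\<exists>k. inR D \<sigma> t k \<omega>) \<and> inA D \<sigma> t k \<omega>) \<or>
     (\<not> (\<exists>k. inR D \<sigma> t k \<omega>) \<and> ((inA D \<sigma> t k \<omega> \<and> \<not> zstat D \<sigma> k (Suc t - s D k) \<omega> < l D k (Suc t - s D k)
             \<and> Suc t - s D k \<noteq> J D k) \<or> (k \<in> {1..K D} \<and> s D k = Suc t))))" for k
    unfolding fun_eq_iff inA_def[of _ _ "Suc t"] ts_Suc_fst ne by (auto simp: inA_def)
  have eR: "inR D \<sigma> (Suc t) k = (\<lambda>\<omega>. ((\<exists>k. inR D \<sigma> t k \<omega>) \<and> inR D \<sigma> t k \<omega>) \<or>
     (\<not> (\<exists>k. inR D \<sigma> t k \<omega>) \<and> inA D \<sigma> t k \<omega> \<and> u D k (Suc t - s D k) < zstat D \<sigma> k (Suc t - s D k) \<omega>))" for k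
    unfolding fun_eq_iff inR_def[of _ _ "Suc t"] ts_Suc_snd ne by (auto simp: inR_def inA_def)
  show ?case unfolding eA eR by (intro allI conjI) measurable
qed

lemma event_sets:
  assumes "sets L = sets (PiM I (\<lambda>_. borel :: real measure))"
  shows "{\<omega> \<in> space L. \<exists>k \<in> rejected D \<sigma> \<omega>. \<mu> k \<le> \<mu> 0} \<in> sets L"
proof -
  have [measurable]: "Measurable.pred (PiM I (\<lambda>_. borel :: real measure)) (inR D \<sigma> (J0 D) k)" for k
    using ts_meas[where t="J0 D" and I=I and D=D and \<sigma>=\<sigma>] by auto
  have "Measurable.pred (PiM I (\<lambda>_. borel :: real measure)) (\<lambda>\<omega>. \<exists>k. inR D \<sigma> (J0 D) k \<omega> \<and> \<mu> k \<le> \<mu> 0)"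
    by measurable
  then have "Measurable.pred (PiM I (\<lambda>_. borel :: real measure)) (\<lambda>\<omega>. \<exists>k. k \<in> snd (trial_state D \<sigma> \<omega> (J0 D)) \<and> \<mu> k \<le> \<mu> 0)"
    unfolding inR_def .
  then have "Measurable.pred L (\<lambda>\<omega>. \<exists>k. k \<in> snd (trial_state D \<sigma> \<omega> (J0 D)) \<and> \<mu> k \<le> \<mu> 0)"
    unfolding Measurable.pred_def using assms sets_eq_imp_space_eq[OF assms] by simp
  then show ?thesis unfolding rejected_def Measurable.pred_def by (simp add: Bex_def)
qed

lemma outcome_sets: "sets (outcome_measure KK N \<mu> \<sigma>) = sets (PiM ({0..KK}\<times>{1..N}) (\<lambda>_. borel :: real measure))"
  unfolding outcome_measure_def by (intro sets_PiM_cong) auto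

lemma outcome_shift:
  assumes sig: "0 < \<sigma>"
  shows "distr (outcome_measure KK N \<mu>G \<sigma>) (outcome_measure KK N \<mu> \<sigma>)
           (\<lambda>\<omega>. \<lambda>x\<in>{0..KK}\<times>{1..N}. \<omega> x + (\<mu> (fst x) - \<mu>G (fst x))) = outcome_measure KK N \<mu> \<sigma>"
proof -
  define M where "M = (\<lambda>(k::nat, i::nat). density lborel (normal_density (\<mu>G k) \<sigma>))"
  define M' where "M' = (\<lambda>(k::nat, i::nat). density lborel (normal_density (\<mu> k) \<sigma>))"
  define f where "f = (\<lambda>(x :: nat \<times> nat) (y::real). y + (\<mu> (fst x) - \<mu>G (fst x)))"
  have pM: "product_prob_space M" unfolding M_def
    by (intro product_prob_spaceI) (auto intro: prob_space_normal_density sig)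
  have pM': "product_prob_space M'" unfolding M'_def
    by (intro product_prob_spaceI) (auto intro: prob_space_normal_density sig)
  have fm: "f i \<in> measurable (M i) (M' i)" for i
    unfolding f_def M_def M'_def by (cases i) simp
  have eqi: "distr (M i) (M' i) (f i) = M' i" for i
    unfolding f_def M_def M'_def using norm_shift[OF sig, of "\<mu>G (fst i)" "\<mu> (fst i) - \<mu>G (fst i)"]
    by (cases i) simp
  have "distr (PiM ({0..KK}\<times>{1..N}) M) (PiM ({0..KK}\<times>{1..N}) M') (\<lambda>x. \<lambda>i\<in>{0..KK}\<times>{1..N}. f i (x i))
     = PiM ({0..KK}\<times>{1..N}) (\<lambda>i. distr (M i) (M' i) (f i))"
    by (rule distr_PiM_finite_prob_space_gen[OF _ pM pM' fm]) simp
  then show ?thesis unfolding eqi outcome_measure_def M_def[symmetric] M'_def[symmetric]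
    by (simp add: f_def)
qed

theorem theorem1:
  fixes D :: design and N :: nat and \<sigma> :: real and \<mu> \<mu>G :: "nat \<Rightarrow> real"
  assumes "valid_design D"
    and "0 < \<sigma>"
    and "n0 D (J0 D) \<le> N"
    and "\<forall>k \<in> {1..K D}. \<forall>j \<in> {1..J D k}. n D k j \<le> N"
    and "\<forall>k \<in> {1..K D}. \<mu>G k = \<mu>G 0"
  shows "fwer D N \<mu> \<sigma> \<le> fwer D N \<mu>G \<sigma>"
proof -
  define I where "I = {0..K D}\<times>{1..N}"
  define PG where "PG = outcome_measure (K D) N \<mu>G \<sigma>"
  define PM where "PM = outcome_measure (K D) N \<mu> \<sigma>"
  define c where "c = (\<lambda>k. \<mu> k - \<mu>G k)"
  define sh where "sh = (\<lambda>\<omega>. \<lambda>x\<in>I. \<omega> x + c (fst x))"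
  define EM where "EM = {\<omega> \<in> space PM. \<exists>k \<in> rejected D \<sigma> \<omega>. \<mu> k \<le> \<mu> 0}"
  define EG where "EG = {\<omega> \<in> space PG. \<exists>k \<in> rejected D \<sigma> \<omega>. \<mu>G k \<le> \<mu>G 0}"
  have dist: "distr PG PM sh = PM"
    unfolding PG_def PM_def sh_def I_def c_def using outcome_shift[OF assms(2)] by simp
  have EMs: "EM \<in> sets PM" unfolding EM_def PM_def by (rule event_sets[OF outcome_sets])
  have EGs: "EG \<in> sets PG" unfolding EG_def PG_def by (rule event_sets[OF outcome_sets])
  have shm: "sh \<in> measurable PG PM"
  proof -
    have "sh \<in> measurable (PiM I (\<lambda>_. borel :: real measure)) (PiM I (\<lambda>_. borel :: real measure))"
      unfolding sh_def by (rule measurable_restrict) measurable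
    then show ?thesis unfolding PG_def PM_def
      using measurable_cong_sets[OF outcome_sets outcome_sets] I_def by simp
  qed
  interpret G: prob_space PG unfolding PG_def outcome_measure_def
    by (intro prob_space_PiM) (auto intro: prob_space_normal_density assms(2))
  have sub: "sh -` EM \<inter> space PG \<subseteq> EG"
  proof
    fix \<omega> assume w: "\<omega> \<in> sh -` EM \<inter> space PG"
    then obtain k where k: "k \<in> rejected D \<sigma> (sh \<omega>)" "\<mu> k \<le> \<mu> 0" unfolding EM_def by auto
    have H: "zstat D \<sigma> k' j (sh \<omega>) \<le> zstat D \<sigma> k' j \<omega>"
      if "k' \<in> {1..K D}" "j \<in> {1..J D k'}" "\<mu> k' \<le> \<mu> 0" for k' j
      unfolding sh_def I_def
      by (rule zstat_shift[OF assms(1-4) that(1,2)]) (use that assms(5) in \<open>auto simp: c_def\<close>)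
    have "snd (trial_state D \<sigma> \<omega> (J0 D)) \<noteq> {}"
      using compare[OF assms(1) H, where t="J0 D"] k unfolding rejected_def by blast
    then obtain k' where k': "k' \<in> snd (trial_state D \<sigma> \<omega> (J0 D))" by auto
    then have "k' \<in> {1..K D}" using ts_sub[of D \<sigma> \<omega> "J0 D"] by auto
    then have "\<mu>G k' \<le> \<mu>G 0" using assms(5) by auto
    then show "\<omega> \<in> EG" using k' w unfolding EG_def rejected_def by auto
  qed
  have "fwer D N \<mu> \<sigma> = measure PM EM" unfolding fwer_def PM_def EM_def ..
  also have "\<dots> = measure (distr PG PM sh) EM" using dist by simp
  also have "\<dots> = measure PG (sh -` EM \<inter> space PG)" by (rule measure_distr[OF shm EMs])
  also have "\<dots> \<le> measure PG EG"
    by (rule measure_mono_fmeasurable[OF sub]) (use EGs shm EMs in \<open>auto simp: G.fmeasurable_eq_sets\<close>)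
  also have "\<dots> = fwer D N \<mu>G \<sigma>" unfolding fwer_def PG_def EG_def ..
  finally show ?thesis .
qed


end
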